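(* Fix $K>0$ and $z\in\mathbb{C}$, and assume $b_n\ge m\ge m_0$ for a sufficiently large constant $m_0$. For all sufficiently large $n$ (depending on $K$) the following holds on the event $\mathcal{E}_K$: for every unit vector $v\in\mathbb{C}^n$ that is orthogonal to $\mathcal{H}_1$, and for every $i\in[m-1]$, either $\|v_{[i]}\|\ge b_n^{-10m}m^{-1/2}$ or $\|v_{[i+1]}\|\ge b_n^{-10m}m^{-1/2}$.
   Context: Let $b_n$ divide $n$, $m=n/b_n$, $c_n=3b_n$. Let $\tilde D_i,\tilde U_i,\tilde T_i$ ($i\in[m]$) be $b_n\times b_n$ matrices, $D_i=\tilde D_i/\sqrt{c_n}$, $U_i=\tilde U_i/\sqrt{c_n}$, $T_i=\tilde T_i/\sqrt{c_n}$, $(D_i)_z=D_i-zI_{b_n}$. Let $X$ be the $n\times n$ block matrix ($m\times m$ blocks of size $b_n$, block indices modulo $m$) with $(i,i)$ block $D_i$, $(i,i-1)$ block $T_{i-1}$, $(i,i+1)$ block $U_{i+1}$, other blocks zero, and $X_z=X-zI$. $\mathcal{H}_1$ is the span of all rows of $X_z$ except the first. $\mathcal{E}_K$ is the event that for all $i\in[m]$: $\|U_i\|,\|(D_i)_z\|,\|T_i\|\le K$ and the smallest singular values satisfy $s_{b_n}(U_i),s_{b_n}(T_i)\ge b_n^{-5}$. For $v\in\mathbb{C}^n$, $v_{[1]},\dots,v_{[m]}\in\mathbb{C}^{b_n}$ are the consecutive blocks of $b_n$ coordinates of $v$. *)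

theory Defs
  imports Complex_Main
begin

text \<open>Vectors in C^k are functions nat \<Rightarrow> complex, only coordinates 0..k-1 matter.
  A k x k matrix is a function nat \<Rightarrow> nat \<Rightarrow> complex (row, column), entries with indices < k matter.
  Block families (D_i, U_i, T_i) are functions from the 1-based block index i \<in> {1..m} to matrices.\<close>

definition vnorm :: "nat \<Rightarrow> (nat \<Rightarrow> complex) \<Rightarrow> real" where
  "vnorm k x = sqrt (\<Sum>j<k. (cmod (x j))\<^sup>2)"

definition mulv :: "nat \<Rightarrow> (nat \<Rightarrow> nat \<Rightarrow> complex) \<Rightarrow> (nat \<Rightarrow> complex) \<Rightarrow> (nat \<Rightarrow> complex)" where
  "mulv k A x = (\<lambda>p. \<Sum>q<k. A p q * x q)"

definition opnorm :: "nat \<Rightarrow> (nat \<Rightarrow> nat \<Rightarrow> complex) \<Rightarrow> real" where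
  "opnorm k A = Sup {vnorm k (mulv k A x) | x. vnorm k x = 1}"

definition smin :: "nat \<Rightarrow> (nat \<Rightarrow> nat \<Rightarrow> complex) \<Rightarrow> real" where
  "smin k A = Inf {vnorm k (mulv k A x) | x. vnorm k x = 1}"

text \<open>Scaled blocks D_i = tilde D_i / sqrt(c_n), c_n = 3 b_n.\<close>
definition scaleb :: "nat \<Rightarrow> (nat \<Rightarrow> nat \<Rightarrow> nat \<Rightarrow> complex) \<Rightarrow> (nat \<Rightarrow> nat \<Rightarrow> nat \<Rightarrow> complex)" where
  "scaleb b M = (\<lambda>i p q. M i p q / complex_of_real (sqrt (real (3 * b))))"

definition prevb :: "nat \<Rightarrow> nat \<Rightarrow> nat" where
  "prevb m i = (if i = 1 then m else i - 1)"

definition nextb :: "nat \<Rightarrow> nat \<Rightarrow> nat" where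
  "nextb m i = (if i = m then 1 else i + 1)"

text \<open>The n x n block matrix X (n = m b), with 0-based entry indices r, c < n:
  block (i,i) = D_i, block (i,i-1) = T_{i-1}, block (i,i+1) = U_{i+1} (indices mod m).\<close>
definition Xmat :: "nat \<Rightarrow> nat \<Rightarrow> (nat \<Rightarrow> nat \<Rightarrow> nat \<Rightarrow> complex) \<Rightarrow> (nat \<Rightarrow> nat \<Rightarrow> nat \<Rightarrow> complex)
    \<Rightarrow> (nat \<Rightarrow> nat \<Rightarrow> nat \<Rightarrow> complex) \<Rightarrow> nat \<Rightarrow> nat \<Rightarrow> complex" where
  "Xmat b m D U T r c =
     (let I = r div b + 1; J = c div b + 1; p = r mod b; q = c mod b in
       (if J = I then D I p q else 0)
     + (if J = prevb m I then T (prevb m I) p q else 0)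
     + (if J = nextb m I then U (nextb m I) p q else 0))"

definition Xz :: "nat \<Rightarrow> nat \<Rightarrow> (nat \<Rightarrow> nat \<Rightarrow> nat \<Rightarrow> complex) \<Rightarrow> (nat \<Rightarrow> nat \<Rightarrow> nat \<Rightarrow> complex)
    \<Rightarrow> (nat \<Rightarrow> nat \<Rightarrow> nat \<Rightarrow> complex) \<Rightarrow> complex \<Rightarrow> nat \<Rightarrow> nat \<Rightarrow> complex" where
  "Xz b m D U T z r c = Xmat b m D U T r c - (if r = c then z else 0)"

definition H1 :: "nat \<Rightarrow> nat \<Rightarrow> (nat \<Rightarrow> nat \<Rightarrow> nat \<Rightarrow> complex) \<Rightarrow> (nat \<Rightarrow> nat \<Rightarrow> nat \<Rightarrow> complex)
    \<Rightarrow> (nat \<Rightarrow> nat \<Rightarrow> nat \<Rightarrow> complex) \<Rightarrow> complex \<Rightarrow> (nat \<Rightarrow> complex) set" where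
  "H1 b m D U T z = {(\<lambda>c. \<Sum>r\<in>{1..<m*b}. a r * Xz b m D U T z r c) | a. True}"

definition cinner :: "nat \<Rightarrow> (nat \<Rightarrow> complex) \<Rightarrow> (nat \<Rightarrow> complex) \<Rightarrow> complex" where
  "cinner n x y = (\<Sum>j<n. x j * cnj (y j))"

definition orth_to :: "nat \<Rightarrow> (nat \<Rightarrow> complex) \<Rightarrow> (nat \<Rightarrow> complex) set \<Rightarrow> bool" where
  "orth_to n v H \<longleftrightarrow> (\<forall>h\<in>H. cinner n v h = 0)"

definition blocknorm :: "nat \<Rightarrow> (nat \<Rightarrow> complex) \<Rightarrow> nat \<Rightarrow> real" where
  "blocknorm b v i = vnorm b (\<lambda>p. v ((i - 1) * b + p))"

text \<open>The event E_K, for D_i, U_i, T_i (already scaled).\<close>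
definition eventE :: "real \<Rightarrow> complex \<Rightarrow> nat \<Rightarrow> nat \<Rightarrow> (nat \<Rightarrow> nat \<Rightarrow> nat \<Rightarrow> complex)
    \<Rightarrow> (nat \<Rightarrow> nat \<Rightarrow> nat \<Rightarrow> complex) \<Rightarrow> (nat \<Rightarrow> nat \<Rightarrow> nat \<Rightarrow> complex) \<Rightarrow> bool" where
  "eventE K z b m D U T \<longleftrightarrow>
     (\<forall>i\<in>{1..m}.
        opnorm b (U i) \<le> K \<and>
        opnorm b (\<lambda>p q. D i p q - (if p = q then z else 0)) \<le> K \<and>
        opnorm b (T i) \<le> K \<and>
        smin b (U i) \<ge> 1 / real b ^ 5 \<and>
        smin b (T i) \<ge> 1 / real b ^ 5)"

end

theory Submission
  imports Defs "HOL-Analysis.L2_Norm"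
begin

definition blk :: "nat \<Rightarrow> (nat \<Rightarrow> complex) \<Rightarrow> nat \<Rightarrow> nat \<Rightarrow> complex" where
  "blk b w J = (\<lambda>q. w ((J-1)*b+q))"

lemma sum_blocks: fixes f :: "nat \<Rightarrow> 'a::comm_monoid_add" shows "(\<Sum>j<m*b. f j) = (\<Sum>J<m. \<Sum>q<b. f (J*b+q))"
proof -
  have "(\<Sum>j<m*b. f j) = (\<Sum>J<m. sum f {J*b..<J*b+b})"
    by (rule sum.nat_group[where g=f and k=b and n=m, symmetric])
  also have "\<dots> = (\<Sum>J<m. \<Sum>q<b. f (J*b+q))"
  proof (rule sum.cong[OF refl])
    fix J
    have "{J*b..<J*b+b} = (\<lambda>q. J*b+q) ` {..<b}"
      apply (auto simp: image_iff)
      subgoal for x by (rule bexI[of _ "x - J*b"]) auto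
      done
    then show "sum f {J*b..<J*b+b} = (\<Sum>q<b. f (J*b+q))"
      by (simp add: sum.reindex inj_on_def)
  qed
  finally show ?thesis .
qed

lemma vnorm_L2: "vnorm k x = L2_set (\<lambda>j. cmod (x j)) {..<k}"
  by (simp add: vnorm_def L2_set_def)

lemma vnorm_nonneg: "vnorm k x \<ge> 0"
  by (simp add: vnorm_def sum_nonneg)

lemma vnorm_cong: "(\<And>j. j < k \<Longrightarrow> x j = y j) \<Longrightarrow> vnorm k x = vnorm k y"
  by (simp add: vnorm_def)

lemma vnorm_triangle: "vnorm k (\<lambda>j. x j + y j) \<le> vnorm k x + vnorm k y"
proof -
  have "vnorm k (\<lambda>j. x j + y j) \<le> L2_set (\<lambda>j. cmod (x j) + cmod (y j)) {..<k}"
    unfolding vnorm_L2 by (rule L2_set_mono) (auto simp: norm_triangle_ineq)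
  also have "\<dots> \<le> vnorm k x + vnorm k y"
    unfolding vnorm_L2 by (rule L2_set_triangle_ineq)
  finally show ?thesis .
qed

lemma vnorm_uminus: "vnorm k (\<lambda>j. - x j) = vnorm k x"
  by (simp add: vnorm_def)

lemma vnorm_scale: "vnorm k (\<lambda>j. c * x j) = cmod c * vnorm k x"
  unfolding vnorm_L2 by (simp add: L2_set_right_distrib norm_mult)

lemma vnorm_zero: "vnorm k x = 0 \<Longrightarrow> j < k \<Longrightarrow> x j = 0"
  unfolding vnorm_L2 by (simp add: L2_set_eq_0_iff)

lemma comp_le_vnorm: "j < k \<Longrightarrow> cmod (x j) \<le> vnorm k x"
  unfolding vnorm_L2 by (rule member_le_L2_set) auto

lemma mulv_scale: "mulv k A (\<lambda>j. c * x j) = (\<lambda>p. c * mulv k A x p)"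
  by (simp add: mulv_def sum_distrib_left algebra_simps)

lemma mulv_bound: "vnorm k (mulv k A x) \<le> L2_set (\<lambda>p. \<Sum>q<k. cmod (A p q)) {..<k} * vnorm k x"
proof -
  have "vnorm k (mulv k A x) \<le> L2_set (\<lambda>p. (\<Sum>q<k. cmod (A p q)) * vnorm k x) {..<k}"
    unfolding vnorm_L2[of k "mulv k A x"]
  proof (rule L2_set_mono)
    fix p assume "p \<in> {..<k}"
    have "cmod (mulv k A x p) \<le> (\<Sum>q<k. cmod (A p q * x q))"
      unfolding mulv_def by (rule norm_sum)
    also have "\<dots> \<le> (\<Sum>q<k. cmod (A p q) * vnorm k x)"
      by (rule sum_mono) (simp add: norm_mult mult_left_mono comp_le_vnorm)
    finally show "cmod (mulv k A x p) \<le> (\<Sum>q<k. cmod (A p q)) * vnorm k x"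
      by (simp add: sum_distrib_right)
  qed simp
  also have "\<dots> = L2_set (\<lambda>p. \<Sum>q<k. cmod (A p q)) {..<k} * vnorm k x"
    by (simp add: L2_set_left_distrib vnorm_nonneg)
  finally show ?thesis .
qed

lemma unit_scale:
  assumes "vnorm k x \<noteq> 0"
  shows "vnorm k (\<lambda>j. complex_of_real (1 / vnorm k x) * x j) = 1"
  using assms vnorm_nonneg[of k x] unfolding vnorm_scale by (simp add: norm_divide)

lemma mulv_zero_vec:
  assumes "vnorm k x = 0" shows "vnorm k (mulv k A x) = 0"
proof -
  have "mulv k A x = (\<lambda>p. 0)"
    unfolding mulv_def using vnorm_zero[OF assms] by (auto intro!: sum.neutral)
  then show ?thesis by (simp add: vnorm_def)
qed

lemma opnorm_le:
  assumes "opnorm k A \<le> K"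
  shows "vnorm k (mulv k A x) \<le> K * vnorm k x"
proof (cases "vnorm k x = 0")
  case True
  then show ?thesis using mulv_zero_vec[OF True] by simp
next
  case False
  define t where "t = vnorm k x"
  have t: "t > 0" using False vnorm_nonneg[of k x] unfolding t_def by linarith
  define y where "y = (\<lambda>j. complex_of_real (1 / t) * x j)"
  have y1: "vnorm k y = 1" unfolding y_def t_def by (rule unit_scale[OF False])
  have my: "vnorm k (mulv k A y) = vnorm k (mulv k A x) / t"
    unfolding y_def mulv_scale vnorm_scale using t by (simp add: norm_divide)
  let ?S = "{vnorm k (mulv k A x) | x. vnorm k x = 1}"
  have "bdd_above ?S"
  proof (rule bdd_aboveI)
    fix s assume "s \<in> ?S"
    then obtain x where "vnorm k x = 1" "s = vnorm k (mulv k A x)" by blast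
    then show "s \<le> L2_set (\<lambda>p. \<Sum>q<k. cmod (A p q)) {..<k}"
      using mulv_bound[of k A x] by simp
  qed
  moreover have "vnorm k (mulv k A y) \<in> ?S" using y1 by blast
  ultimately have "vnorm k (mulv k A y) \<le> Sup ?S" by (intro cSup_upper)
  then have "vnorm k (mulv k A x) / t \<le> K" using assms my unfolding opnorm_def by simp
  then show ?thesis using t unfolding t_def by (simp add: field_simps)
qed

lemma smin_le:
  assumes "smin k A \<ge> s" "s \<ge> 0"
  shows "s * vnorm k x \<le> vnorm k (mulv k A x)"
proof (cases "vnorm k x = 0")
  case True
  then show ?thesis using vnorm_nonneg by simp
next
  case False
  define t where "t = vnorm k x"
  have t: "t > 0" using False vnorm_nonneg[of k x] unfolding t_def by linarith
  define y where "y = (\<lambda>j. complex_of_real (1 / t) * x j)"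
  have y1: "vnorm k y = 1" unfolding y_def t_def by (rule unit_scale[OF False])
  have my: "vnorm k (mulv k A y) = vnorm k (mulv k A x) / t"
    unfolding y_def mulv_scale vnorm_scale using t by (simp add: norm_divide)
  let ?S = "{vnorm k (mulv k A x) | x. vnorm k x = 1}"
  have "bdd_below ?S"
    using vnorm_nonneg by (auto intro!: bdd_belowI[of _ 0])
  moreover have "vnorm k (mulv k A y) \<in> ?S" using y1 by blast
  ultimately have "Inf ?S \<le> vnorm k (mulv k A y)" by (intro cInf_lower)
  then have "s \<le> vnorm k (mulv k A x) / t" using assms my unfolding smin_def by simp
  then show ?thesis using t unfolding t_def by (simp add: field_simps)
qed

lemma delta_blocks:
  fixes f :: "nat \<Rightarrow> complex" and a m :: nat
  assumes "a < m"
  shows "(\<Sum>J<m. \<Sum>q<b. (if J = a then f q else 0) * g J q) = (\<Sum>q<b. f q * g a q)"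
proof -
  have "(\<Sum>J<m. \<Sum>q<b. (if J = a then f q else 0) * g J q) = (\<Sum>J<m. if J = a then (\<Sum>q<b. f q * g J q) else 0)"
    by (rule sum.cong) auto
  also have "\<dots> = (\<Sum>q<b. f q * g a q)" using assms by (subst sum.delta) auto
  finally show ?thesis .
qed

lemma prevb_range: "1 \<le> I \<Longrightarrow> I \<le> m \<Longrightarrow> 1 \<le> prevb m I \<and> prevb m I \<le> m"
  by (auto simp: prevb_def)

lemma nextb_range: "1 \<le> I \<Longrightarrow> I \<le> m \<Longrightarrow> 1 \<le> nextb m I \<and> nextb m I \<le> m"
  by (auto simp: nextb_def)

lemma row_eq:
  assumes b: "b > 0" and I: "1 \<le> I" "I \<le> m" and p: "p < b"
  shows "(\<Sum>c<m*b. Xz b m D U T z ((I-1)*b+p) c * w c) =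
     mulv b (T (prevb m I)) (blk b w (prevb m I)) p
   + mulv b (\<lambda>p q. D I p q - (if p = q then z else 0)) (blk b w I) p
   + mulv b (U (nextb m I)) (blk b w (nextb m I)) p"
proof -
  let ?P = "prevb m I" and ?N = "nextb m I"
  have key: "Xz b m D U T z ((I-1)*b+p) (J*b+q) =
      (if J = I-1 then D I p q - (if p = q then z else 0) else 0)
    + (if J = ?P - 1 then T ?P p q else 0)
    + (if J = ?N - 1 then U ?N p q else 0)" if q: "q < b" for J q
  proof -
    have d1: "((I-1)*b+p) div b = I-1" "((I-1)*b+p) mod b = p" using b p by auto
    have d2: "(J*b+q) div b = J" "(J*b+q) mod b = q" using b q by auto
    have eq: "((I-1)*b+p = J*b+q) \<longleftrightarrow> (J = I-1 \<and> q = p)"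
      by (metis d1 d2)
    have i1: "I - 1 + 1 = I" using I by simp
    have pr: "(J + 1 = ?P) \<longleftrightarrow> (J = ?P - 1)" "(J + 1 = ?N) \<longleftrightarrow> (J = ?N - 1)" "(J + 1 = I) \<longleftrightarrow> (J = I - 1)"
      using prevb_range[OF I] nextb_range[OF I] I by auto
    show ?thesis
      unfolding Xz_def Xmat_def Let_def d1 d2 i1 pr eq by auto
  qed
  have "(\<Sum>c<m*b. Xz b m D U T z ((I-1)*b+p) c * w c)
     = (\<Sum>J<m. \<Sum>q<b. Xz b m D U T z ((I-1)*b+p) (J*b+q) * w (J*b+q))"
    by (rule sum_blocks)
  also have "\<dots> = (\<Sum>J<m. \<Sum>q<b.
        (if J = I-1 then D I p q - (if p = q then z else 0) else 0) * w (J*b+q)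
      + (if J = ?P - 1 then T ?P p q else 0) * w (J*b+q)
      + (if J = ?N - 1 then U ?N p q else 0) * w (J*b+q))"
    by (intro sum.cong refl, subst key) (auto simp: distrib_right)
  also have "\<dots> = (\<Sum>J<m. \<Sum>q<b. (if J = I-1 then D I p q - (if p = q then z else 0) else 0) * w (J*b+q))
      + (\<Sum>J<m. \<Sum>q<b. (if J = ?P - 1 then T ?P p q else 0) * w (J*b+q))
      + (\<Sum>J<m. \<Sum>q<b. (if J = ?N - 1 then U ?N p q else 0) * w (J*b+q))"
    by (simp add: sum.distrib)
  also have "\<dots> = (\<Sum>q<b. (D I p q - (if p = q then z else 0)) * w ((I-1)*b+q))
      + (\<Sum>q<b. T ?P p q * w ((?P-1)*b+q))
      + (\<Sum>q<b. U ?N p q * w ((?N-1)*b+q))"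
  proof -
    have a1: "I - 1 < m" "?P - 1 < m" "?N - 1 < m"
      using I prevb_range[OF I] nextb_range[OF I] by auto
    show ?thesis
      using delta_blocks[OF a1(1), where f="\<lambda>q. D I p q - (if p = q then z else 0)" and b=b and g="\<lambda>J q. w (J*b+q)"]
        delta_blocks[OF a1(2), where f="\<lambda>q. T ?P p q" and b=b and g="\<lambda>J q. w (J*b+q)"]
        delta_blocks[OF a1(3), where f="\<lambda>q. U ?N p q" and b=b and g="\<lambda>J q. w (J*b+q)"]
      by simp
  qed
  finally show ?thesis by (simp add: mulv_def blk_def)
qed

lemma step_ineq:
  fixes C L e x y :: real
  assumes "x \<le> L^k * e" "y \<le> L^(k+1) * e" "0 \<le> e" "1 \<le> L" "2*C \<le> L" "0 \<le> C"
  shows "C * (x + y) \<le> L^(k+2) * e"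
proof -
  have "L^k \<le> L^(k+1)" using assms(4) by (simp add: power_increasing)
  then have "x + y \<le> 2 * (L^(k+1) * e)" using assms(1,2,3) mult_right_mono[of "L^k" "L^(k+1)" e] by linarith
  then have "C * (x + y) \<le> C * (2 * (L^(k+1) * e))" using assms(6) by (rule mult_left_mono)
  also have "\<dots> = (2*C) * (L^(k+1) * e)" by simp
  also have "\<dots> \<le> L * (L^(k+1) * e)"
    using assms by (intro mult_right_mono) auto
  also have "\<dots> = L^(k+2) * e" by simp
  finally show ?thesis .
qed

lemma chain_bound:
  fixes a :: "nat \<Rightarrow> real" and i m :: nat and L C e :: real
  assumes i: "1 \<le> i" "i + 1 \<le> m" and ai: "a i \<le> e" "a (i+1) \<le> e"
    and e: "0 \<le> e" and L: "1 \<le> L" "2*C \<le> L" and C: "0 \<le> C"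
    and fwd: "\<And>I. 2 \<le> I \<Longrightarrow> I + 1 \<le> m \<Longrightarrow> a (I+1) \<le> C * (a (I-1) + a I)"
    and bwd: "\<And>I. 2 \<le> I \<Longrightarrow> I + 1 \<le> m \<Longrightarrow> a (I-1) \<le> C * (a I + a (I+1))"
    and J: "1 \<le> J" "J \<le> m"
  shows "a J \<le> L^m * e"
proof -
  have Le: "e \<le> L * e" using L e by (simp add: mult_right_mono[of 1 L e, simplified])
  have Q: "i+k+1 \<le> m \<longrightarrow> a (i+k) \<le> L^k * e \<and> a (i+k+1) \<le> L^(k+1) * e" for k
  proof (induction k)
    case 0
    then show ?case using ai Le by simp
  next
    case (Suc k)
    show ?case
    proof
      assume h: "i + Suc k + 1 \<le> m"
      then have IH: "a (i+k) \<le> L^k * e" "a (i+k+1) \<le> L^(k+1) * e" using Suc by auto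
      have "a (i+k+1+1) \<le> C * (a (i+k+1-1) + a (i+k+1))"
        using fwd[of "i+k+1"] i h by simp
      also have "\<dots> \<le> L^(k+2) * e"
        using step_ineq[OF _ IH(2) e L C] IH(1) by simp
      finally show "a (i + Suc k) \<le> L ^ Suc k * e \<and> a (i + Suc k + 1) \<le> L ^ (Suc k + 1) * e"
        using IH by simp
    qed
  qed
  have R: "k+1 \<le> i \<longrightarrow> a (i+1-k) \<le> L^k * e \<and> a (i-k) \<le> L^(k+1) * e" for k
  proof (induction k)
    case 0
    then show ?case using ai Le by simp
  next
    case (Suc k)
    show ?case
    proof
      assume h: "Suc k + 1 \<le> i"
      then have IH: "a (i+1-k) \<le> L^k * e" "a (i-k) \<le> L^(k+1) * e" using Suc by auto
      have "a (i-k-1) \<le> C * (a (i-k) + a (i-k+1))"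
        using bwd[of "i-k"] i h by simp
      also have "\<dots> \<le> L^(k+2) * e"
      proof -
        have h1: "a (i-k+1) \<le> L^k * e" using IH(1) h by (simp add: Suc_diff_le)
        show ?thesis using step_ineq[OF h1 IH(2) e L C] by (simp add: add.commute)
      qed
      finally show "a (i + 1 - Suc k) \<le> L ^ Suc k * e \<and> a (i - Suc k) \<le> L ^ (Suc k + 1) * e"
        using IH h by simp
    qed
  qed
  show ?thesis
  proof (cases "i + 1 \<le> J")
    case True
    define k where "k = J - i - 1"
    have k: "J = i + k + 1" using True unfolding k_def by simp
    then have "a J \<le> L^(J-i) * e" using Q[of k] J by simp
    also have "\<dots> \<le> L^m * e" using L e J True by (intro mult_right_mono power_increasing) auto
    finally show ?thesis .
  next
    case False
    then have "a J \<le> L^(i-J+1) * e" using R[of "i-J"] J by simp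
    also have "\<dots> \<le> L^m * e" using L e J i False by (intro mult_right_mono power_increasing) auto
    finally show ?thesis .
  qed
qed

lemma sum3_neg:
  fixes x y z :: complex
  assumes "x + y + z = 0"
  shows "z = - (x + y)" "x = - (y + z)"
  using assms by algebra+

lemma main_lemma:
  fixes K :: real and b m n i :: nat and z :: complex and v :: "nat \<Rightarrow> complex"
  assumes K: "K > 0" and b: "real b \<ge> 2*K+2" and nmb: "n = m*b" and m3: "3 \<le> m"
    and E: "eventE K z b m D U T" and v1: "vnorm n v = 1"
    and orth: "orth_to n v (H1 b m D U T z)" and i: "1 \<le> i" "i + 1 \<le> m"
  shows "blocknorm b v i \<ge> 1 / (real b ^ (10 * m) * sqrt (real m)) \<or>
         blocknorm b v (i + 1) \<ge> 1 / (real b ^ (10 * m) * sqrt (real m))"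
proof (rule ccontr)
  define eps where "eps = 1 / (real b ^ (10 * m) * sqrt (real m))"
  assume "\<not> ?thesis"
  then have lt: "blocknorm b v i < eps" "blocknorm b v (i+1) < eps" unfolding eps_def by auto
  have b0: "b > 0" using b K by auto
  define w where "w = (\<lambda>j. cnj (v j))"
  define a where "a = (\<lambda>J. vnorm b (blk b w J))"
  have bn: "blocknorm b v J = a J" for J
    by (simp add: blocknorm_def vnorm_def blk_def a_def w_def)
  have a0: "a J \<ge> 0" for J unfolding a_def by (rule vnorm_nonneg)
  have row0: "(\<Sum>c<m*b. Xz b m D U T z r c * w c) = 0" if r: "1 \<le> r" "r < m*b" for r
  proof -
    define h where "h = (\<lambda>c. \<Sum>r'\<in>{1..<m*b}. (if r' = r then 1 else 0) * Xz b m D U T z r' c)"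
    have hH: "h \<in> H1 b m D U T z" unfolding H1_def h_def mem_Collect_eq
      by (rule exI[of _ "\<lambda>r'. if r' = r then 1 else 0"]) simp
    have h: "h = (\<lambda>c. Xz b m D U T z r c)"
    proof
      fix c
      have "(\<Sum>r'\<in>{1..<m*b}. (if r' = r then 1 else 0) * Xz b m D U T z r' c)
          = (\<Sum>r'\<in>{1..<m*b}. if r' = r then Xz b m D U T z r' c else 0)"
        by (rule sum.cong) auto
      also have "\<dots> = Xz b m D U T z r c" using r by (subst sum.delta) auto
      finally show "h c = Xz b m D U T z r c" unfolding h_def .
    qed
    have "cinner n v h = 0" using orth hH unfolding orth_to_def by blast
    then have "(\<Sum>j<m*b. v j * cnj (Xz b m D U T z r j)) = 0"
      unfolding cinner_def h nmb .
    then have "cnj (\<Sum>j<m*b. v j * cnj (Xz b m D U T z r j)) = 0" by simp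
    then show ?thesis unfolding w_def cnj_sum by (simp add: mult.commute)
  qed
  have rowI: "mulv b (T (prevb m I)) (blk b w (prevb m I)) p
     + mulv b (\<lambda>p q. D I p q - (if p = q then z else 0)) (blk b w I) p
     + mulv b (U (nextb m I)) (blk b w (nextb m I)) p = 0"
    if I: "2 \<le> I" "I \<le> m" and p: "p < b" for I p
  proof -
    have "(I-1)*b + p < (I-1)*b + b" using p by simp
    also have "(I-1)*b + b = I*b" using I by (simp add: algebra_simps mult_eq_if)
    also have "I*b \<le> m*b" using I by simp
    finally have r1: "(I-1)*b + p < m*b" .
    have r0: "1 \<le> (I-1)*b + p" using I b0 by (simp add: Suc_le_eq)
    show ?thesis using row_eq[OF b0 _ I(2) p, of D U T z w] row0[OF r0 r1] I by simp
  qed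
  have Eb: "opnorm b (U I) \<le> K" "opnorm b (\<lambda>p q. D I p q - (if p = q then z else 0)) \<le> K"
     "opnorm b (T I) \<le> K" "smin b (U I) \<ge> 1 / real b ^ 5" "smin b (T I) \<ge> 1 / real b ^ 5"
    if "1 \<le> I" "I \<le> m" for I
    using E that unfolding eventE_def by auto
  define C where "C = real b ^ 5 * K"
  have pn: "prevb m I = I - 1" "nextb m I = I + 1" if "2 \<le> I" "I + 1 \<le> m" for I
    using that by (auto simp: prevb_def nextb_def)
  have sb: "0 \<le> 1 / real b ^ 5" by simp
  have fwd: "a (I+1) \<le> C * (a (I-1) + a I)" if I: "2 \<le> I" "I + 1 \<le> m" for I
  proof -
    have eqv: "vnorm b (mulv b (U (I+1)) (blk b w (I+1))) = vnorm b (\<lambda>p. - (mulv b (T (I-1)) (blk b w (I-1)) p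
        + mulv b (\<lambda>p q. D I p q - (if p = q then z else 0)) (blk b w I) p))"
    proof (rule vnorm_cong)
      fix j assume "j < b"
      then show "mulv b (U (I+1)) (blk b w (I+1)) j = - (mulv b (T (I-1)) (blk b w (I-1)) j
        + mulv b (\<lambda>p q. D I p q - (if p = q then z else 0)) (blk b w I) j)"
        using sum3_neg(1)[OF rowI[of I j]] I pn[OF I] by simp
    qed
    have "1 / real b ^ 5 * a (I+1) \<le> vnorm b (mulv b (U (I+1)) (blk b w (I+1)))"
      unfolding a_def by (rule smin_le[OF Eb(4) sb]) (use I in auto)
    also have "\<dots> \<le> vnorm b (mulv b (T (I-1)) (blk b w (I-1))) + vnorm b (mulv b (\<lambda>p q. D I p q - (if p = q then z else 0)) (blk b w I))"
      unfolding eqv vnorm_uminus by (rule vnorm_triangle)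
    also have "\<dots> \<le> K * a (I-1) + K * a I"
      unfolding a_def using I by (intro add_mono opnorm_le Eb) auto
    finally have "1 / real b ^ 5 * a (I+1) \<le> K * a (I-1) + K * a I" .
    then show ?thesis using b0 unfolding C_def by (simp add: field_simps)
  qed
  have bwd: "a (I-1) \<le> C * (a I + a (I+1))" if I: "2 \<le> I" "I + 1 \<le> m" for I
  proof -
    have eqv: "vnorm b (mulv b (T (I-1)) (blk b w (I-1))) = vnorm b (\<lambda>p. - (mulv b (\<lambda>p q. D I p q - (if p = q then z else 0)) (blk b w I) p
        + mulv b (U (I+1)) (blk b w (I+1)) p))"
    proof (rule vnorm_cong)
      fix j assume "j < b"
      then show "mulv b (T (I-1)) (blk b w (I-1)) j = - (mulv b (\<lambda>p q. D I p q - (if p = q then z else 0)) (blk b w I) j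
        + mulv b (U (I+1)) (blk b w (I+1)) j)"
        using sum3_neg(2)[OF rowI[of I j]] I pn[OF I] by simp
    qed
    have "1 / real b ^ 5 * a (I-1) \<le> vnorm b (mulv b (T (I-1)) (blk b w (I-1)))"
      unfolding a_def by (rule smin_le[OF Eb(5) sb]) (use I in auto)
    also have "\<dots> \<le> vnorm b (mulv b (\<lambda>p q. D I p q - (if p = q then z else 0)) (blk b w I)) + vnorm b (mulv b (U (I+1)) (blk b w (I+1)))"
      unfolding eqv vnorm_uminus by (rule vnorm_triangle)
    also have "\<dots> \<le> K * a I + K * a (I+1)"
      unfolding a_def using I by (intro add_mono opnorm_le Eb) auto
    finally have "1 / real b ^ 5 * a (I-1) \<le> K * a I + K * a (I+1)" .
    then show ?thesis using b0 unfolding C_def by (simp add: field_simps)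
  qed
  define L where "L = 2 * C + 1"
  define e where "e = max (a i) (a (i+1))"
  have C0: "C \<ge> 0" unfolding C_def using K by simp
  have L1: "1 \<le> L" "2 * C \<le> L" unfolding L_def using C0 by auto
  have e0: "0 \<le> e" "e < eps" unfolding e_def using a0[of i] lt bn by (auto simp: le_max_iff_disj)
  have bound: "a J \<le> L^m * e" if "1 \<le> J" "J \<le> m" for J
    by (rule chain_bound[OF i _ _ e0(1) L1 C0 fwd bwd that]) (auto simp: e_def)
  have "1 = (vnorm n w)^2" using v1 by (simp add: vnorm_def w_def)
  also have "\<dots> = (\<Sum>j<m*b. (cmod (w j))^2)" by (simp add: vnorm_def nmb sum_nonneg)
  also have "\<dots> = (\<Sum>J<m. \<Sum>q<b. (cmod (w (J*b+q)))^2)" by (rule sum_blocks)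
  also have "\<dots> = (\<Sum>J<m. (a (J+1))^2)"
    by (intro sum.cong refl) (simp add: a_def vnorm_def blk_def sum_nonneg)
  also have "\<dots> \<le> (\<Sum>J<m. (L^m * e)^2)"
    by (intro sum_mono power_mono bound) (auto simp: a0)
  also have "\<dots> = real m * (L^m * e)^2" by simp
  also have "\<dots> < real m * (L^m * eps)^2"
    using m3 L1 e0 by (intro mult_strict_left_mono power_strict_mono mult_strict_left_mono) auto
  also have "\<dots> \<le> 1"
  proof -
    have b1: "real b \<ge> 1" using b0 by simp
    have "real b ^ 5 \<ge> real b" using b1 power_increasing[of 1 5 "real b"] by simp
    then have b5: "real b ^ 5 \<ge> 2*K+2" using b by linarith
    have "real b ^ 10 = real b ^ 5 * real b ^ 5" by (simp flip: power_add)
    also have "\<dots> \<ge> (2*K+2) * real b ^ 5" using b5 by (intro mult_right_mono) auto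
    finally have "real b ^ 10 \<ge> (2*K+2) * real b ^ 5" .
    moreover have "real b ^ 5 \<ge> 1" using b1 by simp
    ultimately have Lb: "L \<le> real b ^ 10" unfolding L_def C_def by (simp add: algebra_simps)
    have "L^m \<le> (real b ^ 10)^m" using L1 Lb by (intro power_mono) auto
    also have "\<dots> = real b ^ (10*m)" by (simp add: power_mult)
    finally have Lm: "L^m \<le> real b ^ (10*m)" .
    have bpos: "real b ^ (10*m) > 0" using b0 by simp
    have sm: "sqrt (real m) > 0" using m3 by simp
    have "L^m * eps \<le> real b ^ (10*m) * eps" using Lm unfolding eps_def by (intro mult_right_mono) auto
    also have "\<dots> = 1 / sqrt (real m)" unfolding eps_def using bpos by simp
    finally have "L^m * eps \<le> 1 / sqrt (real m)" .
    moreover have "L^m * eps \<ge> 0" using L1 unfolding eps_def by simp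
    ultimately have "(L^m * eps)^2 \<le> (1 / sqrt (real m))^2" by (intro power_mono)
    also have "\<dots> = 1 / real m" by (simp add: power_divide)
    finally show ?thesis using m3 by (simp add: field_simps)
  qed
  finally show False by simp
qed

theorem proposition2p6:
  "\<exists>m0::nat. \<forall>K::real. K > 0 \<longrightarrow> (\<forall>z::complex. \<exists>N::nat.
     \<forall>n b m Dt Ut Tt v. n \<ge> N \<longrightarrow> b dvd n \<longrightarrow> m = n div b \<longrightarrow> m0 \<le> m \<longrightarrow> m \<le> b \<longrightarrow>
       eventE K z b m (scaleb b Dt) (scaleb b Ut) (scaleb b Tt) \<longrightarrow>
       vnorm n v = 1 \<longrightarrow>
       orth_to n v (H1 b m (scaleb b Dt) (scaleb b Ut) (scaleb b Tt) z) \<longrightarrow>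
       (\<forall>i\<in>{1..m-1}.
          blocknorm b v i \<ge> 1 / (real b ^ (10 * m) * sqrt (real m)) \<or>
          blocknorm b v (i + 1) \<ge> 1 / (real b ^ (10 * m) * sqrt (real m))))"
proof (rule exI[of _ 3], intro allI impI)
  fix K :: real and z :: complex
  assume K: "K > 0"
  define c where "c = nat \<lceil>2*K+2\<rceil>"
  show "\<exists>N::nat.
     \<forall>n b m Dt Ut Tt v. n \<ge> N \<longrightarrow> b dvd n \<longrightarrow> m = n div b \<longrightarrow> 3 \<le> m \<longrightarrow> m \<le> b \<longrightarrow>
       eventE K z b m (scaleb b Dt) (scaleb b Ut) (scaleb b Tt) \<longrightarrow>
       vnorm n v = 1 \<longrightarrow>
       orth_to n v (H1 b m (scaleb b Dt) (scaleb b Ut) (scaleb b Tt) z) \<longrightarrow>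
       (\<forall>i\<in>{1..m-1}.
          blocknorm b v i \<ge> 1 / (real b ^ (10 * m) * sqrt (real m)) \<or>
          blocknorm b v (i + 1) \<ge> 1 / (real b ^ (10 * m) * sqrt (real m)))"
  proof (intro exI[of _ "c*c"] allI impI ballI)
    fix n b m :: nat and Dt Ut Tt :: "nat \<Rightarrow> nat \<Rightarrow> nat \<Rightarrow> complex" and v :: "nat \<Rightarrow> complex" and i :: nat
    assume nN: "c*c \<le> n" and bd: "b dvd n" and mdef: "m = n div b" and m3: "3 \<le> m" and mb: "m \<le> b"
      and E: "eventE K z b m (scaleb b Dt) (scaleb b Ut) (scaleb b Tt)" and v1: "vnorm n v = 1"
      and orth: "orth_to n v (H1 b m (scaleb b Dt) (scaleb b Ut) (scaleb b Tt) z)"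
      and i: "i \<in> {1..m-1}"
    have nmb: "n = m*b" using bd mdef by simp
    have "c \<le> b"
    proof (rule ccontr)
      assume "\<not> c \<le> b"
      then have "b < c" by simp
      then have "m*b < c*c" using mb by (meson le_less_trans mult_le_mono1 mult_strict_mono' zero_le)
      then show False using nN nmb by simp
    qed
    then have b: "real b \<ge> 2*K+2" unfolding c_def by linarith
    show "blocknorm b v i \<ge> 1 / (real b ^ (10 * m) * sqrt (real m)) \<or>
          blocknorm b v (i + 1) \<ge> 1 / (real b ^ (10 * m) * sqrt (real m))"
      by (rule main_lemma[OF K b nmb m3 E v1 orth]) (use i in auto)
  qed
qed

end
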